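(* Let $(X,d)$ be a bounded metric space and let $M: X\to\mathbb{R}$ satisfy $d(x,y)\le M(x)\le d(x,z)+M(z)$ for all $x,y,z\in X$. Let $d_S$ be the subset distance on $\mathcal{F}(X)$ defined in the context. Then for any $X_1,X_2\in\mathcal{F}(X)$, $d_S(X_1,X_2)=d_S(X_1\setminus X_2,\,X_2\setminus X_1)$.
   Context: $\mathcal{F}(X)$ denotes the set of all finite subsets of $X$ (including the empty set). For $A,B\in\mathcal{F}(X)$ with $|A|\le|B|$ and an injection $\chi:A\to B$, define $d_\chi(A,B)=\sum_{x\in A} d(x,\chi(x))+\sum_{y\in B\setminus\chi(A)} M(y)$. The subset distance is $d_S(A,B)=d_S(B,A)=\min\{d_\chi(A,B) : \chi:A\to B \text{ an injection}\}$ (for $|A|\le|B|$). *)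

theory Defs
  imports "HOL-Analysis.Analysis"
begin

definition d_chi :: "('a \<Rightarrow> 'a \<Rightarrow> real) \<Rightarrow> ('a \<Rightarrow> real) \<Rightarrow> ('a \<Rightarrow> 'a) \<Rightarrow> 'a set \<Rightarrow> 'a set \<Rightarrow> real" where
  "d_chi d M chi A B = (\<Sum>x\<in>A. d x (chi x)) + (\<Sum>y\<in>B - chi ` A. M y)"

text \<open>Minimum over injections A \<rightarrow> B (meaningful when card A \<le> card B).\<close>
definition d_S_le :: "('a \<Rightarrow> 'a \<Rightarrow> real) \<Rightarrow> ('a \<Rightarrow> real) \<Rightarrow> 'a set \<Rightarrow> 'a set \<Rightarrow> real" where
  "d_S_le d M A B = Min {d_chi d M chi A B | chi. inj_on chi A \<and> chi ` A \<subseteq> B}"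

definition d_S :: "('a \<Rightarrow> 'a \<Rightarrow> real) \<Rightarrow> ('a \<Rightarrow> real) \<Rightarrow> 'a set \<Rightarrow> 'a set \<Rightarrow> real" where
  "d_S d M A B = (if card A \<le> card B then d_S_le d M A B else d_S_le d M B A)"

end

theory Submission
  imports Defs
begin

lemma step:
  assumes ms: "Metric_space X d"
    and Mc: "\<And>w z. w \<in> X \<Longrightarrow> z \<in> X \<Longrightarrow> M w \<le> d w z + M z"
    and fA: "finite A" and fB: "finite B" and AX: "A \<subseteq> X" and BX: "B \<subseteq> X"
    and zA: "z \<in> A" and zB: "z \<in> B" and inj: "inj_on chi A" and im: "chi ` A \<subseteq> B"
  shows "\<exists>chi'. inj_on chi' (A - {z}) \<and> chi' ` (A - {z}) \<subseteq> B - {z} \<and>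
           d_chi d M chi' (A - {z}) (B - {z}) \<le> d_chi d M chi A B"
proof -
  interpret Metric_space X d by (rule ms)
  define w where "w = chi z"
  have wB: "w \<in> B" using im zA w_def by auto
  have sumA: "(\<Sum>x\<in>A. d x (chi x)) = d z w + (\<Sum>x\<in>A-{z}. d x (chi x))"
    using fA zA w_def by (simp add: sum.remove)
  show ?thesis
  proof (cases "w = z")
    case True
    have dz: "d z w = 0" using True zA AX by auto
    have e: "B - {z} - chi ` (A - {z}) = B - chi ` A"
      using True w_def zA inj by (auto simp: inj_on_def) (metis imageI)
    have "inj_on chi (A - {z})" using inj by (auto simp: inj_on_def)
    moreover have "chi ` (A - {z}) \<subseteq> B - {z}" using True w_def zA inj im by (auto simp: inj_on_def)
    moreover have "d_chi d M chi (A - {z}) (B - {z}) = d_chi d M chi A B"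
      unfolding d_chi_def using sumA dz e by simp
    ultimately show ?thesis by force
  next
    case False
    show ?thesis
    proof (cases "z \<in> chi ` A")
      case True
      then obtain u where uA: "u \<in> A" and uz: "chi u = z" by auto
      have unz: "u \<noteq> z" using uz False w_def by auto
      define chi' where "chi' = chi(u := w)"
      have sumA2: "(\<Sum>x\<in>A-{z}. d x (chi x)) = d u z + (\<Sum>x\<in>A-{z}-{u}. d x (chi x))"
        using fA uA unz uz by (simp add: sum.remove)
      have sumA3: "(\<Sum>x\<in>A-{z}. d x (chi' x)) = d u w + (\<Sum>x\<in>A-{z}-{u}. d x (chi x))"
        using fA uA unz by (simp add: sum.remove chi'_def)
      have tri: "d u w \<le> d u z + d z w"
        using triangle[of u z w] uA zA wB AX BX by blast
      have img: "chi' ` (A - {z}) = chi ` A - {z}"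
      proof
        show "chi' ` (A - {z}) \<subseteq> chi ` A - {z}"
        proof
          fix y assume "y \<in> chi' ` (A - {z})"
          then obtain x where x: "x \<in> A" "x \<noteq> z" "y = chi' x" by auto
          show "y \<in> chi ` A - {z}"
          proof (cases "x = u")
            case True then show ?thesis using x False w_def zA by (auto simp: chi'_def)
          next
            case False then show ?thesis using x uz uA inj by (auto simp: chi'_def inj_on_def)
          qed
        qed
      next
        show "chi ` A - {z} \<subseteq> chi' ` (A - {z})"
        proof
          fix y assume y: "y \<in> chi ` A - {z}"
          then obtain x where x: "x \<in> A" "y = chi x" "y \<noteq> z" by auto
          show "y \<in> chi' ` (A - {z})"
          proof (cases "x = z")
            case True
            then have "y = chi' u" using x w_def by (simp add: chi'_def)
            then show ?thesis using uA unz by auto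
          next
            case False
            then have "x \<noteq> u" using x uz by auto
            then have "y = chi' x" using x by (simp add: chi'_def)
            then show ?thesis using x False by auto
          qed
        qed
      qed
      have e: "B - {z} - chi' ` (A - {z}) = B - chi ` A"
        using img True by auto
      have "inj_on chi' (A - {z})"
        unfolding inj_on_def
      proof (intro ballI impI)
        fix x y assume xy: "x \<in> A - {z}" "y \<in> A - {z}" "chi' x = chi' y"
        show "x = y"
          using xy inj zA w_def unfolding chi'_def inj_on_def
          by (cases "x = u"; cases "y = u") (auto simp: fun_upd_def split: if_splits)
      qed
      moreover have "chi' ` (A - {z}) \<subseteq> B - {z}" using img im by auto
      moreover have "d_chi d M chi' (A - {z}) (B - {z}) \<le> d_chi d M chi A B"
        unfolding d_chi_def using sumA sumA2 sumA3 e tri by simp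
      ultimately show ?thesis by force
    next
      case notin: False
      have e: "B - {z} - chi ` (A - {z}) = insert w (B - chi ` A) - {z}"
        using notin zA w_def wB inj by (auto simp: inj_on_def)
      have wn: "w \<notin> B - chi ` A" using w_def zA by auto
      have fr: "finite (B - chi ` A)" using fB by auto
      have s1: "(\<Sum>y\<in>B - chi ` A. M y) = M z + (\<Sum>y\<in>B - chi ` A - {z}. M y)"
        using fr zB notin by (simp add: sum.remove)
      have s2: "(\<Sum>y\<in>insert w (B - chi ` A) - {z}. M y) = M w + (\<Sum>y\<in>B - chi ` A - {z}. M y)"
        using fr wn False by (simp add: insert_Diff_if)
      have mw: "M w \<le> d z w + M z" using Mc[of w z] wB zB BX commute by auto
      have "inj_on chi (A - {z})" using inj by (auto simp: inj_on_def)
      moreover have "chi ` (A - {z}) \<subseteq> B - {z}" using notin im by auto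
      moreover have "d_chi d M chi (A - {z}) (B - {z}) \<le> d_chi d M chi A B"
        unfolding d_chi_def using sumA e s1 s2 mw by simp
      ultimately show ?thesis by force
    qed
  qed
qed

lemma reduce:
  assumes ms: "Metric_space X d"
    and Mc: "\<And>w z. w \<in> X \<Longrightarrow> z \<in> X \<Longrightarrow> M w \<le> d w z + M z"
  shows "finite A \<Longrightarrow> finite B \<Longrightarrow> A \<subseteq> X \<Longrightarrow> B \<subseteq> X \<Longrightarrow> inj_on chi A \<Longrightarrow> chi ` A \<subseteq> B \<Longrightarrow>
    \<exists>psi. inj_on psi (A - B) \<and> psi ` (A - B) \<subseteq> B - A \<and> d_chi d M psi (A - B) (B - A) \<le> d_chi d M chi A B"
proof (induction "card (A \<inter> B)" arbitrary: A B chi rule: less_induct)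
  case less
  show ?case
  proof (cases "A \<inter> B = {}")
    case True
    then have "A - B = A" "B - A = B" by auto
    then show ?thesis using less.prems by auto
  next
    case False
    then obtain z where zA: "z \<in> A" and zB: "z \<in> B" by auto
    obtain chi' where c: "inj_on chi' (A - {z})" "chi' ` (A - {z}) \<subseteq> B - {z}"
       "d_chi d M chi' (A - {z}) (B - {z}) \<le> d_chi d M chi A B"
      using step[OF ms Mc less.prems(1-4) zA zB less.prems(5-6)] by blast
    have "card ((A - {z}) \<inter> (B - {z})) < card (A \<inter> B)"
    proof -
      have "(A - {z}) \<inter> (B - {z}) = (A \<inter> B) - {z}" by auto
      then show ?thesis using zA zB less.prems(1)
        by (metis IntI card_Diff1_less finite_Int)
    qed
    moreover have "A - {z} \<subseteq> X" "B - {z} \<subseteq> X" "finite (A - {z})" "finite (B - {z})"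
      using less.prems(1-4) by auto
    ultimately have "\<exists>psi. inj_on psi (A - {z} - (B - {z})) \<and>
               psi ` (A - {z} - (B - {z})) \<subseteq> B - {z} - (A - {z}) \<and>
               d_chi d M psi (A - {z} - (B - {z})) (B - {z} - (A - {z}))
               \<le> d_chi d M chi' (A - {z}) (B - {z})"
      using less.hyps c(1,2) by blast
    then obtain psi where "inj_on psi (A - {z} - (B - {z}))" "psi ` (A - {z} - (B - {z})) \<subseteq> B - {z} - (A - {z})"
      "d_chi d M psi (A - {z} - (B - {z})) (B - {z} - (A - {z})) \<le> d_chi d M chi' (A - {z}) (B - {z})"
      by auto
    moreover have "A - {z} - (B - {z}) = A - B" "B - {z} - (A - {z}) = B - A" using zA zB by auto
    ultimately show ?thesis using c(3) by (metis order_trans)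
  qed
qed

lemma extend:
  assumes ms: "Metric_space X d" and fA: "finite A" and fB: "finite B" and AX: "A \<subseteq> X"
    and inj: "inj_on psi (A - B)" and im: "psi ` (A - B) \<subseteq> B - A"
  shows "\<exists>chi. inj_on chi A \<and> chi ` A \<subseteq> B \<and> d_chi d M chi A B = d_chi d M psi (A - B) (B - A)"
proof -
  interpret Metric_space X d by (rule ms)
  define chi where "chi = (\<lambda>x. if x \<in> B then x else psi x)"
  have "inj_on chi A"
    unfolding inj_on_def
  proof (intro ballI impI)
    fix x y assume xy: "x \<in> A" "y \<in> A" "chi x = chi y"
    show "x = y"
    proof (cases "x \<in> B"; cases "y \<in> B")
      assume "x \<notin> B" "y \<notin> B" then show ?thesis using xy inj by (auto simp: chi_def inj_on_def)
    next
      assume "x \<in> B" "y \<notin> B" then show ?thesis using xy im by (auto simp: chi_def)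
    next
      assume "x \<notin> B" "y \<in> B" then show ?thesis using xy im by (auto simp: chi_def)
    qed (use xy in \<open>auto simp: chi_def\<close>)
  qed
  moreover have img: "chi ` A = psi ` (A - B) \<union> (A \<inter> B)"
    by (auto simp: chi_def)
  moreover have "chi ` A \<subseteq> B" using img im by auto
  moreover have "d_chi d M chi A B = d_chi d M psi (A - B) (B - A)"
  proof -
    have AU: "A = (A - B) \<union> (A \<inter> B)" by auto
    have "(\<Sum>x\<in>A. d x (chi x)) = (\<Sum>x\<in>A - B. d x (chi x)) + (\<Sum>x\<in>A \<inter> B. d x (chi x))"
      using fA by (subst AU) (rule sum.union_disjoint, auto)
    also have "(\<Sum>x\<in>A \<inter> B. d x (chi x)) = 0"
      using AX by (intro sum.neutral) (auto simp: chi_def)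
    also have "(\<Sum>x\<in>A - B. d x (chi x)) = (\<Sum>x\<in>A - B. d x (psi x))"
      by (rule sum.cong) (auto simp: chi_def)
    finally have s: "(\<Sum>x\<in>A. d x (chi x)) = (\<Sum>x\<in>A - B. d x (psi x))" by simp
    have "B - chi ` A = B - A - psi ` (A - B)" using img by auto
    then show ?thesis unfolding d_chi_def using s by simp
  qed
  ultimately show ?thesis by blast
qed

lemma fin_vals:
  assumes "finite A" "finite B"
  shows "finite {d_chi d M chi A B | chi. inj_on chi A \<and> chi ` A \<subseteq> B}"
proof (rule finite_subset)
  show "{d_chi d M chi A B | chi. inj_on chi A \<and> chi ` A \<subseteq> B} \<subseteq> (\<lambda>f. d_chi d M f A B) ` (A \<rightarrow>\<^sub>E B)"
  proof
    fix v assume "v \<in> {d_chi d M chi A B | chi. inj_on chi A \<and> chi ` A \<subseteq> B}"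
    then obtain chi where v: "v = d_chi d M chi A B" and im: "chi ` A \<subseteq> B" by auto
    have "restrict chi A \<in> A \<rightarrow>\<^sub>E B" using im by auto
    moreover have "d_chi d M (restrict chi A) A B = v"
      proof -
      have "restrict chi A ` A = chi ` A" by auto
      moreover have "(\<Sum>x\<in>A. d x (restrict chi A x)) = (\<Sum>x\<in>A. d x (chi x))" by simp
      ultimately show ?thesis unfolding v d_chi_def by simp
    qed
    ultimately show "v \<in> (\<lambda>f. d_chi d M f A B) ` (A \<rightarrow>\<^sub>E B)" by force
  qed
  show "finite ((\<lambda>f. d_chi d M f A B) ` (A \<rightarrow>\<^sub>E B))"
    using assms by (intro finite_imageI finite_PiE) auto
qed

lemma main:
  assumes ms: "Metric_space X d"
    and Mc: "\<And>w z. w \<in> X \<Longrightarrow> z \<in> X \<Longrightarrow> M w \<le> d w z + M z"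
    and fA: "finite A" and fB: "finite B" and AX: "A \<subseteq> X" and BX: "B \<subseteq> X"
    and c: "card (A - B) \<le> card (B - A)"
  shows "d_S_le d M A B = d_S_le d M (A - B) (B - A)"
proof -
  let ?S = "{d_chi d M chi A B | chi. inj_on chi A \<and> chi ` A \<subseteq> B}"
  let ?T = "{d_chi d M chi (A - B) (B - A) | chi. inj_on chi (A - B) \<and> chi ` (A - B) \<subseteq> B - A}"
  have fS: "finite ?S" using fin_vals fA fB by blast
  have fT: "finite ?T" using fin_vals fA fB by blast
  obtain f where f: "f ` (A - B) \<subseteq> B - A" "inj_on f (A - B)"
    using card_le_inj[OF _ _ c] fA fB by blast
  then have neT: "?T \<noteq> {}" by blast
  have TS: "?T \<subseteq> ?S"
  proof
    fix v assume "v \<in> ?T"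
    then obtain psi where "v = d_chi d M psi (A - B) (B - A)" "inj_on psi (A - B)" "psi ` (A - B) \<subseteq> B - A" by auto
    then obtain chi where "inj_on chi A" "chi ` A \<subseteq> B" "d_chi d M chi A B = v"
      using extend[OF ms fA fB AX, of psi M] by auto
    then show "v \<in> ?S" by auto
  qed
  then have neS: "?S \<noteq> {}" using neT by auto
  have "Min ?S \<le> Min ?T" using Min_antimono[OF TS neT fS] .
  moreover have "Min ?T \<le> Min ?S"
  proof -
    have "Min ?S \<in> ?S" using fS neS by (rule Min_in)
    then obtain chi where "Min ?S = d_chi d M chi A B" "inj_on chi A" "chi ` A \<subseteq> B" by auto
    moreover obtain psi where "inj_on psi (A - B)" "psi ` (A - B) \<subseteq> B - A" "d_chi d M psi (A - B) (B - A) \<le> d_chi d M chi A B"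
      using reduce[OF ms Mc fA fB AX BX] calculation(2,3) by blast
    moreover have "Min ?T \<le> d_chi d M psi (A - B) (B - A)"
    proof (rule Min_le[OF fT])
      show "d_chi d M psi (A - B) (B - A) \<in> ?T" using calculation(4,5) by blast
    qed
    ultimately show ?thesis by linarith
  qed
  ultimately show ?thesis unfolding d_S_le_def by linarith
qed

lemma card_iff:
  assumes "finite A" "finite B"
  shows "card A \<le> card B \<longleftrightarrow> card (A - B) \<le> card (B - A)"
proof -
  have 1: "card (A - B) = card A - card (A \<inter> B)" using assms by (simp add: card_Diff_subset_Int)
  have 2: "card (B - A) = card B - card (A \<inter> B)" using assms
    by (simp add: card_Diff_subset_Int Int_commute)
  have 3: "card (A \<inter> B) \<le> card A" "card (A \<inter> B) \<le> card B" using assms by (auto intro: card_mono)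
  show ?thesis using 1 2 3 by linarith
qed

theorem corollary2p2:
  fixes X :: "'a set" and d :: "'a \<Rightarrow> 'a \<Rightarrow> real" and M :: "'a \<Rightarrow> real"
    and X1 X2 :: "'a set"
  assumes "Metric_space X d"
    and "Metric_space.mbounded X d X"
    and "\<And>x y z. x \<in> X \<Longrightarrow> y \<in> X \<Longrightarrow> z \<in> X \<Longrightarrow> d x y \<le> M x \<and> M x \<le> d x z + M z"
    and "finite X1" and "X1 \<subseteq> X"
    and "finite X2" and "X2 \<subseteq> X"
  shows "d_S d M X1 X2 = d_S d M (X1 - X2) (X2 - X1)"
proof -
  have Mc: "\<And>w z. w \<in> X \<Longrightarrow> z \<in> X \<Longrightarrow> M w \<le> d w z + M z"
    using assms(3) by blast
  show ?thesis
  proof (cases "card X1 \<le> card X2")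
    case True
    then have c: "card (X1 - X2) \<le> card (X2 - X1)" using card_iff assms(4,6) by blast
    show ?thesis unfolding d_S_def using True c main[OF assms(1) Mc assms(4,6,5,7) c] by simp
  next
    case False
    then have c: "card (X2 - X1) \<le> card (X1 - X2)" "\<not> card (X1 - X2) \<le> card (X2 - X1)"
      using card_iff[OF assms(4,6)] card_iff[OF assms(6,4)] by linarith+
    show ?thesis unfolding d_S_def using False c main[OF assms(1) Mc assms(6,4,7,5) c(1)] by simp
  qed
qed

end
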